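(* Assume Schanuel's conjecture $(S)$. Let $\alpha\neq 0$ be an algebraic number and let $z$ be an irrational complex number. If $\alpha^{\alpha^{z}}=z$, then $z$ is transcendental.
   Context: Schanuel's conjecture $(S)$: if $\alpha_1,\dots,\alpha_n\in\mathbb{C}$ are linearly independent over $\mathbb{Q}$, then the transcendence degree of $\mathbb{Q}(\alpha_1,\dots,\alpha_n,e^{\alpha_1},\dots,e^{\alpha_n})$ over $\mathbb{Q}$ is at least $n$. Powers of $\alpha$ are defined via a fixed determination $\log\alpha$: $\alpha^{u}:=e^{u\log\alpha}$, and $\alpha^{\alpha^{z}}:=e^{\alpha^{z}\log\alpha}$. *)

theory Defs
  imports "HOL-Analysis.Analysis" "HOL-Computational_Algebra.Polynomial"
begin

definition Q_lin_indep :: "nat \<Rightarrow> (nat \<Rightarrow> complex) \<Rightarrow> bool" where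
  "Q_lin_indep n a \<longleftrightarrow>
     (\<forall>q :: nat \<Rightarrow> rat. (\<Sum>i<n. of_rat (q i) * a i) = 0 \<longrightarrow> (\<forall>i<n. q i = 0))"

text \<open>A polynomial is given by a finite set E of exponent vectors (supported in T) with
  rational coefficients c.\<close>
definition Q_alg_indep :: "complex set \<Rightarrow> bool" where
  "Q_alg_indep T \<longleftrightarrow> finite T \<and>
     (\<forall>(E :: (complex \<Rightarrow> nat) set) (c :: (complex \<Rightarrow> nat) \<Rightarrow> rat).
        finite E \<longrightarrow> (\<forall>e\<in>E. \<forall>x. x \<notin> T \<longrightarrow> e x = 0) \<longrightarrow>
        (\<Sum>e\<in>E. of_rat (c e) * (\<Prod>t\<in>T. t ^ e t)) = 0 \<longrightarrow> (\<forall>e\<in>E. c e = 0))"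

text \<open>Transcendence degree of Q(S) over Q is at least n (S finite): S contains n
  algebraically independent elements (a transcendence basis can be chosen from generators).\<close>
definition trdeg_ge :: "complex set \<Rightarrow> nat \<Rightarrow> bool" where
  "trdeg_ge S n \<longleftrightarrow> (\<exists>T\<subseteq>S. card T = n \<and> Q_alg_indep T)"

definition schanuel :: bool where
  "schanuel \<longleftrightarrow> (\<forall>n (a :: nat \<Rightarrow> complex). Q_lin_indep n a \<longrightarrow>
       trdeg_ge (a ` {..<n} \<union> (\<lambda>i. exp (a i)) ` {..<n}) n)"

end

theory Submission
  imports Defs
begin

lemma algebraic_affine:
  fixes z r0 r1 :: complex
  assumes "algebraic z" "r0 \<in> \<rat>" "r1 \<in> \<rat>" "r1 \<noteq> 0"
  shows "algebraic (r0 + r1 * z)"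
proof -
  obtain p where p: "\<forall>i. coeff p i \<in> \<rat>" "p \<noteq> 0" "poly p z = 0"
    using assms(1) algebraic_altdef by blast
  define q where "q = pcompose p [:-r0/r1, 1/r1:]"
  have "poly q (r0 + r1*z) = 0" using p assms by (simp add: q_def poly_pcompose field_simps)
  moreover have "q \<noteq> 0" using p assms by (simp add: q_def pcompose_eq_0_iff)
  moreover have "coeff q i \<in> \<rat>" for i unfolding q_def
    by (rule coeff_pcompose_semiring_closed) (use p assms in \<open>auto simp: coeff_pCons split: nat.splits\<close>)
  ultimately show ?thesis by (intro algebraicI') auto
qed

lemma dep_rel:
  fixes T :: "complex set" and p :: "complex poly" and f :: "nat \<Rightarrow> complex \<Rightarrow> nat"
  assumes ind: "Q_alg_indep T" and p: "\<forall>i. coeff p i \<in> \<rat>" "p \<noteq> 0"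
    and supp: "\<And>k t. t \<notin> T \<Longrightarrow> f k t = 0" and fx: "\<And>k. k \<le> degree p \<Longrightarrow> f k x = k"
    and rel: "(\<Sum>k\<le>degree p. coeff p k * (\<Prod>t\<in>T. t ^ f k t)) = 0"
  shows False
proof -
  define E where "E = f ` {..degree p}"
  define c where "c = (\<lambda>e. inv (of_rat :: rat \<Rightarrow> complex) (coeff p (e x)))"
  have inj: "inj_on f {..degree p}" by (rule inj_onI) (metis atMost_iff fx)
  have oc: "of_rat (c e) = coeff p (e x)" for e
    using p(1) unfolding c_def Rats_def by (simp add: f_inv_into_f)
  have "(\<Sum>e\<in>E. of_rat (c e) * (\<Prod>t\<in>T. t ^ e t)) = 0"
    using rel unfolding E_def by (simp add: sum.reindex[OF inj] oc fx)
  moreover have "finite E" unfolding E_def by simp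
  moreover have "\<forall>e\<in>E. \<forall>t. t \<notin> T \<longrightarrow> e t = 0" using supp unfolding E_def by auto
  ultimately have all: "\<forall>e\<in>E. c e = 0" using ind unfolding Q_alg_indep_def by blast
  have "f (degree p) \<in> E" unfolding E_def by simp
  then have "c (f (degree p)) = 0" using all by blast
  then have "coeff p (degree p) = 0" using oc[of "f (degree p)"] fx[of "degree p"] by simp
  with p(2) show False by simp
qed

lemma prod_supp:
  fixes T A :: "complex set"
  assumes "finite T" "A \<subseteq> T" "\<And>t. t \<notin> A \<Longrightarrow> g t = 0"
  shows "(\<Prod>t\<in>T. t ^ g t) = (\<Prod>t\<in>A. t ^ g t)"
  by (rule prod.mono_neutral_right) (use assms in auto)

lemma dep_single:
  assumes "Q_alg_indep T" "a \<in> T" "algebraic a"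
  shows False
proof -
  obtain p where p: "\<forall>i. coeff p i \<in> \<rat>" "p \<noteq> 0" "poly p a = 0"
    using assms(3) algebraic_altdef by blast
  have fin: "finite T" using assms(1) unfolding Q_alg_indep_def by blast
  define f where "f = (\<lambda>(k::nat) t. if t = a then k else 0)"
  have pr: "(\<Prod>t\<in>T. t ^ f k t) = a ^ k" for k
    using prod_supp[OF fin, of "{a}" "f k"] assms(2) by (simp add: f_def)
  show False
  proof (rule dep_rel[OF assms(1) p(1,2), of f a])
    show "(\<Sum>k\<le>degree p. coeff p k * (\<Prod>t\<in>T. t ^ f k t)) = 0"
      using p(3) by (simp add: pr poly_altdef)
  qed (use assms in \<open>auto simp: f_def\<close>)
qed

lemma dep_hom:
  fixes L z :: complex
  assumes "Q_alg_indep T" "L \<in> T" "z*L \<in> T" "L \<noteq> z*L" "algebraic z"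
  shows False
proof -
  obtain p where p: "\<forall>i. coeff p i \<in> \<rat>" "p \<noteq> 0" "poly p z = 0"
    using assms(5) algebraic_altdef by blast
  have fin: "finite T" using assms(1) unfolding Q_alg_indep_def by blast
  define d where "d = degree p"
  define f where "f = (\<lambda>(k::nat) t. if t = z*L then k else if t = L then d - k else 0)"
  have pr: "(\<Prod>t\<in>T. t ^ f k t) = (z*L) ^ k * L ^ (d - k)" for k
    using prod_supp[OF fin, of "{z*L, L}" "f k"] assms(2,3,4) by (auto simp: f_def)
  have "(\<Sum>k\<le>d. coeff p k * ((z*L) ^ k * L ^ (d - k))) = (\<Sum>k\<le>d. coeff p k * z^k) * L^d"
    unfolding sum_distrib_right
  proof (intro sum.cong refl)
    fix k assume "k \<in> {..d}"
    then have "k + (d - k) = d" by simp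
    then have "(z*L)^k * L^(d-k) = z^k * L^d"
      by (metis (no_types, lifting) mult.assoc power_add power_mult_distrib)
    then show "coeff p k * ((z*L) ^ k * L ^ (d - k)) = coeff p k * z^k * L^d" by simp
  qed
  also have "\<dots> = 0" using p(3) by (simp add: poly_altdef d_def)
  finally have rel: "(\<Sum>k\<le>d. coeff p k * ((z*L) ^ k * L ^ (d - k))) = 0" .
  show False
  proof (rule dep_rel[OF assms(1) p(1,2), of f "z*L"])
    show "(\<Sum>k\<le>degree p. coeff p k * (\<Prod>t\<in>T. t ^ f k t)) = 0"
      using rel by (simp add: pr d_def)
  qed (use assms in \<open>auto simp: f_def\<close>)
qed

lemma dep_C:
  fixes L z \<beta> :: complex
  assumes "Q_alg_indep T" "z*L \<in> T" "\<beta> \<in> T" "\<beta>*L \<in> T"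
    "z*L \<noteq> \<beta>" "z*L \<noteq> \<beta>*L" "\<beta> \<noteq> \<beta>*L" "algebraic z"
  shows False
proof -
  obtain p where p: "\<forall>i. coeff p i \<in> \<rat>" "p \<noteq> 0" "poly p z = 0"
    using assms(8) algebraic_altdef by blast
  have fin: "finite T" using assms(1) unfolding Q_alg_indep_def by blast
  define d where "d = degree p"
  define f where "f = (\<lambda>(k::nat) t. if t = z*L then k else if t = \<beta> then k
      else if t = \<beta>*L then d - k else 0)"
  have pr: "(\<Prod>t\<in>T. t ^ f k t) = (z*L) ^ k * (\<beta> ^ k * (\<beta>*L) ^ (d - k))" for k
    using prod_supp[OF fin, of "{z*L, \<beta>, \<beta>*L}" "f k"] assms(2-7) by (auto simp: f_def)
  have "(\<Sum>k\<le>d. coeff p k * ((z*L) ^ k * (\<beta> ^ k * (\<beta>*L) ^ (d - k))))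
      = (\<Sum>k\<le>d. coeff p k * z^k) * (\<beta>*L)^d"
    unfolding sum_distrib_right
  proof (intro sum.cong refl)
    fix k assume "k \<in> {..d}"
    then have "k + (d - k) = d" by simp
    then have "(z*L)^k * (\<beta> ^ k * (\<beta>*L)^(d-k)) = z^k * (\<beta>*L)^d"
      by (metis (no_types, lifting) mult.assoc mult.commute mult.left_commute power_add power_mult_distrib)
    then show "coeff p k * ((z*L) ^ k * (\<beta> ^ k * (\<beta>*L) ^ (d - k))) = coeff p k * z^k * (\<beta>*L)^d"
      by simp
  qed
  also have "\<dots> = 0" using p(3) by (simp add: poly_altdef d_def)
  finally have rel: "(\<Sum>k\<le>d. coeff p k * ((z*L) ^ k * (\<beta> ^ k * (\<beta>*L) ^ (d - k)))) = 0" .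
  show False
  proof (rule dep_rel[OF assms(1) p(1,2), of f "z*L"])
    show "(\<Sum>k\<le>degree p. coeff p k * (\<Prod>t\<in>T. t ^ f k t)) = 0"
      using rel by (simp add: pr d_def)
  qed (use assms in \<open>auto simp: f_def\<close>)
qed

lemma dep_D:
  fixes L \<beta> :: complex
  assumes "Q_alg_indep T" "L \<in> T" "\<beta> \<in> T" "\<beta>*L \<in> T"
    "L \<noteq> \<beta>" "L \<noteq> \<beta>*L" "\<beta> \<noteq> \<beta>*L"
  shows False
proof -
  define p :: "complex poly" where "p = [:-1, 1:]"
  have p: "\<forall>i. coeff p i \<in> \<rat>" "p \<noteq> 0" "degree p = 1"
    by (auto simp: p_def coeff_pCons split: nat.splits)
  have fin: "finite T" using assms(1) unfolding Q_alg_indep_def by blast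
  define f where "f = (\<lambda>(k::nat) t. if k = 0 then (if t = \<beta>*L then 1 else 0)
      else (if t = \<beta> then k else if t = L then 1 else 0))"
  have pr0: "(\<Prod>t\<in>T. t ^ f 0 t) = \<beta>*L"
    using prod_supp[OF fin, of "{\<beta>*L}" "f 0"] assms(2-7) by (auto simp: f_def)
  have pr1: "(\<Prod>t\<in>T. t ^ f (Suc 0) t) = \<beta> * L"
    using prod_supp[OF fin, of "{\<beta>, L}" "f (Suc 0)"] assms(2-7) by (auto simp: f_def)
  show False
  proof (rule dep_rel[OF assms(1) p(1,2), of f "\<beta>"])
    have "{..1::nat} = {0,1}" by auto
    then show "(\<Sum>k\<le>degree p. coeff p k * (\<Prod>t\<in>T. t ^ f k t)) = 0"
      by (simp add: p(3) pr0 pr1 p_def)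
  qed (use assms p in \<open>auto simp: f_def\<close>)
qed

lemma three_sub:
  assumes "T \<subseteq> {a,b,c}" "card T = 3"
  shows "a \<in> T \<and> b \<in> T \<and> c \<in> T \<and> a \<noteq> b \<and> a \<noteq> c \<and> b \<noteq> c"
proof -
  have "card {a,b,c} \<le> 3" by (simp add: card_insert_if)
  then have "T = {a,b,c}" using assms by (intro card_seteq) auto
  then show ?thesis using assms(2) by (auto simp: card_insert_if split: if_splits)
qed

lemma two_sub:
  assumes "T \<subseteq> {a,b}" "card T = 2"
  shows "a \<in> T \<and> b \<in> T"
proof -
  have "card {a,b} \<le> 2" by (simp add: card_insert_if)
  then have "T = {a,b}" using assms by (intro card_seteq) auto
  then show ?thesis by auto
qed

theorem mainTheorem5:
  fixes \<alpha> L z :: complex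
  assumes "schanuel"
    and "algebraic \<alpha>" and "\<alpha> \<noteq> 0"
    and "exp L = \<alpha>"
    and "z \<notin> \<rat>"
    and "exp (exp (z * L) * L) = z"
  shows "\<not> algebraic z"
proof
  assume az: "algebraic z"
  have L0: "L \<noteq> 0"
  proof
    assume "L = 0"
    then have "z = 1" using assms(6) by simp
    then show False using assms(5) by simp
  qed
  have z1: "z \<noteq> 1" using assms(5) by auto
  have LzL: "L \<noteq> z*L" using L0 z1 by (metis mult_cancel_right2)
  define \<beta> where "\<beta> = exp (z*L)"
  have ez: "exp (\<beta>*L) = z" using assms(6) by (simp add: \<beta>_def)
  have lin2: "of_rat q0 + of_rat q1 * z = 0 \<Longrightarrow> q0 = 0 \<and> q1 = 0" for q0 q1
  proof -
    assume h: "of_rat q0 + of_rat q1 * z = 0"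
    have "q1 = 0"
    proof (rule ccontr)
      assume "q1 \<noteq> 0"
      have "of_rat q1 * z = - of_rat q0" using h by (simp add: eq_neg_iff_add_eq_0 add.commute)
      then have "z = of_rat (- q0 / q1)" using \<open>q1 \<noteq> 0\<close>
        by (simp add: of_rat_divide of_rat_minus field_simps)
      then show False using assms(5) by (metis Rats_of_rat)
    qed
    then show ?thesis using h by simp
  qed
  show False
  proof (cases "algebraic \<beta>")
    case True
    define a where "a = (\<lambda>i::nat. if i = 0 then L else z*L)"
    have "Q_lin_indep 2 a"
      unfolding Q_lin_indep_def
    proof (rule allI, rule impI)
      fix q :: "nat \<Rightarrow> rat"
      assume "(\<Sum>i<2. of_rat (q i) * a i) = 0"
      then have "(of_rat (q 0) + of_rat (q 1) * z) * L = 0"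
        by (simp add: a_def numeral_2_eq_2 algebra_simps)
      then have "q 0 = 0 \<and> q 1 = 0" using lin2 L0 by simp
      then show "\<forall>i<2. q i = 0" by (auto simp: numeral_2_eq_2 less_Suc_eq)
    qed
    then obtain T where T: "T \<subseteq> a ` {..<2} \<union> (\<lambda>i. exp (a i)) ` {..<2}" "card T = 2" "Q_alg_indep T"
      using assms(1) unfolding schanuel_def trdeg_ge_def by blast
    have "a ` {..<2} \<union> (\<lambda>i. exp (a i)) ` {..<2} = {L, z*L, \<alpha>, \<beta>}"
      by (auto simp: a_def numeral_2_eq_2 lessThan_Suc assms(4) \<beta>_def)
    with T(1) have Ts: "T \<subseteq> {L, z*L, \<alpha>, \<beta>}" by simp
    show False
    proof (cases "\<alpha> \<in> T \<or> \<beta> \<in> T")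
      case True
      then show False using dep_single[OF T(3)] assms(2) \<open>algebraic \<beta>\<close> by blast
    next
      case False
      then have "T \<subseteq> {L, z*L}" using Ts by auto
      then have "L \<in> T \<and> z*L \<in> T" using two_sub[OF _ T(2)] by blast
      then show False using dep_hom[OF T(3) _ _ LzL az] by blast
    qed
  next
    case False
    define a where "a = (\<lambda>i::nat. if i = 0 then L else if i = 1 then z*L else \<beta>*L)"
    have "Q_lin_indep 3 a"
      unfolding Q_lin_indep_def
    proof (rule allI, rule impI)
      fix q :: "nat \<Rightarrow> rat"
      assume "(\<Sum>i<3. of_rat (q i) * a i) = 0"
      then have h: "(of_rat (q 0) + of_rat (q 1) * z + of_rat (q 2) * \<beta>) * L = 0"
        by (simp add: a_def numeral_3_eq_3 algebra_simps eval_nat_numeral)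
      then have h2: "of_rat (q 0) + of_rat (q 1) * z + of_rat (q 2) * \<beta> = 0" using L0 by simp
      have q2: "q 2 = 0"
      proof (rule ccontr)
        assume nz: "q 2 \<noteq> 0"
        have c: "(of_rat (q 2) :: complex) \<noteq> 0" using nz by simp
        have e1: "of_rat (q 2) * \<beta> = - (of_rat (q 0) + of_rat (q 1) * z)"
          using h2 by (simp add: eq_neg_iff_add_eq_0 algebra_simps)
        have "\<beta> = - (of_rat (q 0) + of_rat (q 1) * z) / of_rat (q 2)"
          using e1 c by (simp add: eq_divide_eq mult.commute)
        also have "\<dots> = of_rat (- q 0 / q 2) + of_rat (- q 1 / q 2) * z"
          by (simp add: of_rat_divide of_rat_minus add_divide_distrib diff_divide_distrib)
        finally have eq: "\<beta> = of_rat (- q 0 / q 2) + of_rat (- q 1 / q 2) * z" .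
        have "algebraic \<beta>"
        proof (cases "q 1 = 0")
          case True
          then show ?thesis using eq by (simp add: rat_imp_algebraic)
        next
          case False
          then show ?thesis using eq nz by (simp only:) (rule algebraic_affine[OF az], auto)
        qed
        then show False using \<open>\<not> algebraic \<beta>\<close> by simp
      qed
      then have "q 0 = 0 \<and> q 1 = 0" using lin2 h2 by simp
      then show "\<forall>i<3. q i = 0" using q2 by (auto simp: numeral_3_eq_3 less_Suc_eq eval_nat_numeral)
    qed
    then obtain T where T: "T \<subseteq> a ` {..<3} \<union> (\<lambda>i. exp (a i)) ` {..<3}" "card T = 3" "Q_alg_indep T"
      using assms(1) unfolding schanuel_def trdeg_ge_def by blast
    have "a ` {..<3} \<union> (\<lambda>i. exp (a i)) ` {..<3} = {L, z*L, \<beta>*L, \<alpha>, \<beta>, z}"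
      by (auto simp: a_def numeral_3_eq_3 lessThan_Suc assms(4) \<beta>_def[symmetric] ez)
    with T(1) have Ts: "T \<subseteq> {L, z*L, \<beta>*L, \<alpha>, \<beta>, z}" by simp
    show False
    proof (cases "\<alpha> \<in> T \<or> z \<in> T")
      case True
      then show False using dep_single[OF T(3)] assms(2) az by blast
    next
      case nf: False
      show False
      proof (cases "L \<in> T \<and> z*L \<in> T")
        case True
        then show False using dep_hom[OF T(3) _ _ LzL az] by blast
      next
        case False
        show False
        proof (cases "L \<in> T")
          case True
          then have "T \<subseteq> {L, \<beta>*L, \<beta>}" using Ts nf False by auto
          from three_sub[OF this T(2)] show False using dep_D[OF T(3), where L=L and \<beta>=\<beta>] by metis
        next
          case False
          then have "T \<subseteq> {z*L, \<beta>*L, \<beta>}" using Ts nf by auto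
          from three_sub[OF this T(2)] show False using dep_C[OF T(3), where z=z and L=L and \<beta>=\<beta>] az by metis
        qed
      qed
    qed
  qed
qed

end
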